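(* Let $\hat q$ be an $n\times n$ and $\hat p$ an $m\times m$ parametric matrix, let $M$ be an $n\times m$ $(\hat q,\hat p)$-Manin matrix over $\mathfrak R$, and let $N$ be an $m\times s$ matrix over $\mathfrak R$ such that every entry $N_{ij}$ commutes with every entry $M_{kl}$. Let $I=(i_1<\dots<i_r)$ be an increasing multi-index with entries in $\{1,\dots,n\}$ and $K=(k_1,\dots,k_r)$ a multi-index with entries in $\{1,\dots,s\}$. If $r\le m$, then $$\mathrm{cdet}_{\hat q}((MN)_{IK})=\sum_J\mathrm{cdet}_{\hat q}(M_{IJ})\,\mathrm{cdet}_{\hat p}(N_{JK}),$$ the sum over all increasing multi-indices $J=(j_1<\dots<j_r)$ with entries in $\{1,\dots,m\}$; if $r>m$, then $\mathrm{cdet}_{\hat q}((MN)_{IK})=0$. In particular, if $m=n=s$, then $\mathrm{cdet}_{\hat q}(MN)=\mathrm{cdet}_{\hat q}(M)\,\mathrm{cdet}_{\hat p}(N)$.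
   Context: $\mathfrak R$ is an associative unital algebra over $\mathbb C$. A parametric $n\times n$ matrix is a matrix $\hat q=(q_{ij})$ of nonzero complex numbers with $q_{ij}q_{ji}=1$, $q_{ii}=1$. An $n\times m$ matrix $M$ over $\mathfrak R$ is a $(\hat q,\hat p)$-Manin matrix if $M_{ik}M_{jk}=q_{ji}M_{jk}M_{ik}$ for $i<j$ and all $k$, and $M_{ik}M_{jl}-q_{ji}p_{kl}M_{jl}M_{ik}+p_{kl}M_{il}M_{jk}-q_{ji}M_{jk}M_{il}=0$ for $i<j$, $k<l$. For increasing $I=(i_1<\dots<i_r)$ and $\sigma\in S_r$, $\varepsilon(\hat q,I,\sigma)=\prod_{s<t,\ \sigma(s)>\sigma(t)}(-q_{i_{\sigma(s)}i_{\sigma(t)}})$. For any matrix $X$, increasing $I$ and any multi-index $J=(j_1,\dots,j_r)$, $\mathrm{cdet}_{\hat q}(X_{IJ})=\sum_{\sigma\in S_r}\varepsilon(\hat q,I,\sigma)X_{i_{\sigma(1)},j_1}\cdots X_{i_{\sigma(r)},j_r}$; $\mathrm{cdet}_{\hat q}(X)$ is the case $I=J=(1,\dots,n)$. *)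

theory Defs
  imports Complex_Main "HOL-Combinatorics.Permutations"
begin

text \<open>The algebra R is a type 'a of class ring_1 (associative unital ring) together with
  a map c from the complex numbers into the centre of 'a which is a unital ring
  homomorphism (structure of a unital C-algebra; scalar multiplication z*x is c z * x).
  Matrices are functions nat => nat => 'a with indices starting from 1.
  Multi-indices are lists of natural numbers.\<close>

definition central_alg_hom :: "(complex \<Rightarrow> 'a::ring_1) \<Rightarrow> bool" where
  "central_alg_hom c \<longleftrightarrow>
     c 1 = 1 \<and> (\<forall>x y. c (x + y) = c x + c y) \<and> (\<forall>x y. c (x * y) = c x * c y)
     \<and> (\<forall>z a. c z * a = a * c z)"

definition parametric_matrix :: "nat \<Rightarrow> (nat \<Rightarrow> nat \<Rightarrow> complex) \<Rightarrow> bool" where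
  "parametric_matrix n q \<longleftrightarrow>
     (\<forall>i\<in>{1..n}. \<forall>j\<in>{1..n}. q i j \<noteq> 0 \<and> q i j * q j i = 1) \<and> (\<forall>i\<in>{1..n}. q i i = 1)"

definition manin :: "(complex \<Rightarrow> 'a::ring_1) \<Rightarrow> nat \<Rightarrow> nat \<Rightarrow> (nat \<Rightarrow> nat \<Rightarrow> complex)
    \<Rightarrow> (nat \<Rightarrow> nat \<Rightarrow> complex) \<Rightarrow> (nat \<Rightarrow> nat \<Rightarrow> 'a) \<Rightarrow> bool" where
  "manin c n m q p M \<longleftrightarrow>
     (\<forall>i\<in>{1..n}. \<forall>j\<in>{1..n}. \<forall>k\<in>{1..m}. i < j \<longrightarrow>
        M i k * M j k = c (q j i) * M j k * M i k) \<and>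
     (\<forall>i\<in>{1..n}. \<forall>j\<in>{1..n}. \<forall>k\<in>{1..m}. \<forall>l\<in>{1..m}. i < j \<longrightarrow> k < l \<longrightarrow>
        M i k * M j l - c (q j i * p k l) * M j l * M i k + c (p k l) * M i l * M j k
          - c (q j i) * M j k * M i l = 0)"

definition eps :: "(nat \<Rightarrow> nat \<Rightarrow> complex) \<Rightarrow> nat list \<Rightarrow> (nat \<Rightarrow> nat) \<Rightarrow> complex" where
  "eps q I \<sigma> = (\<Prod>(s, t) \<in> {(s, t). s < t \<and> t < length I \<and> \<sigma> s > \<sigma> t}.
                    - q (I ! \<sigma> s) (I ! \<sigma> t))"

text \<open>Column determinant cdet_q(X_{IJ}); positions 0..r-1 of the lists correspond to 1..r.\<close>
definition cdet :: "(complex \<Rightarrow> 'a::ring_1) \<Rightarrow> (nat \<Rightarrow> nat \<Rightarrow> complex) \<Rightarrow> (nat \<Rightarrow> nat \<Rightarrow> 'a)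
    \<Rightarrow> nat list \<Rightarrow> nat list \<Rightarrow> 'a" where
  "cdet c q X I J = (\<Sum>\<sigma> | \<sigma> permutes {..<length I}.
      c (eps q I \<sigma>) * prod_list (map (\<lambda>k. X (I ! \<sigma> k) (J ! k)) [0..<length I]))"

definition matmul :: "nat \<Rightarrow> (nat \<Rightarrow> nat \<Rightarrow> 'a::ring_1) \<Rightarrow> (nat \<Rightarrow> nat \<Rightarrow> 'a) \<Rightarrow> (nat \<Rightarrow> nat \<Rightarrow> 'a)" where
  "matmul m M N = (\<lambda>i k. \<Sum>l = 1..m. M i l * N l k)"

definition incr_multi_indices :: "nat \<Rightarrow> nat \<Rightarrow> nat list set" where
  "incr_multi_indices r m = {J. length J = r \<and> sorted_wrt (<) J \<and> set J \<subseteq> {1..m}}"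

end

theory Submission
  imports Defs
begin


definition adj :: "nat \<Rightarrow> nat \<Rightarrow> nat" where
  "adj t x = (if x = t then Suc t else if x = Suc t then t else x)"

definition invs :: "(nat \<Rightarrow> nat) \<Rightarrow> nat \<Rightarrow> (nat \<times> nat) set" where
  "invs \<sigma> r = {(a, b). a < b \<and> b < r \<and> \<sigma> a > \<sigma> b}"

lemma adj_adj[simp]: "adj t (adj t x) = x"
  by (simp add: adj_def)

lemma adj_comp_adj: "\<sigma> \<circ> adj t \<circ> adj t = \<sigma>"
  by (simp add: fun_eq_iff)

lemma adj_permutes: "Suc t < r \<Longrightarrow> adj t permutes {..<r}"
proof -
  have "\<forall>y. \<exists>!x. adj t x = y" by (metis adj_adj)
  moreover assume "Suc t < r"
  then have "\<forall>x. x \<notin> {..<r} \<longrightarrow> adj t x = x" by (auto simp: adj_def)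
  ultimately show ?thesis unfolding permutes_def by blast
qed

lemma eps_invs: "eps q I \<sigma> = (\<Prod>(a, b) \<in> invs \<sigma> (length I). - q (I ! \<sigma> a) (I ! \<sigma> b))"
  by (simp add: eps_def invs_def)

lemma finite_invs[simp]: "finite (invs \<sigma> r)"
proof -
  have "invs \<sigma> r \<subseteq> {..<r} \<times> {..<r}" by (auto simp: invs_def)
  then show ?thesis by (rule finite_subset) auto
qed

lemma inj_adj_pair: "inj_on (\<lambda>(a, b). (adj t a, adj t b)) X"
    by (rule inj_onI) (auto, metis adj_adj, metis adj_adj)

lemma invs_adj:
  assumes "Suc t < r" "\<sigma> t < \<sigma> (Suc t)"
  shows "invs (\<sigma> \<circ> adj t) r = insert (t, Suc t) ((\<lambda>(a, b). (adj t a, adj t b)) ` invs \<sigma> r)"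
    and "(t, Suc t) \<notin> (\<lambda>(a, b). (adj t a, adj t b)) ` invs \<sigma> r"
proof -
  show "(t, Suc t) \<notin> (\<lambda>(a, b). (adj t a, adj t b)) ` invs \<sigma> r"
    using assms by (auto simp: invs_def adj_def split: if_splits)
  show "invs (\<sigma> \<circ> adj t) r = insert (t, Suc t) ((\<lambda>(a, b). (adj t a, adj t b)) ` invs \<sigma> r)"
  proof (rule set_eqI, rule iffI)
    fix x assume x: "x \<in> invs (\<sigma> \<circ> adj t) r"
    obtain a b where ab: "x = (a, b)" by (cases x)
    show "x \<in> insert (t, Suc t) ((\<lambda>(a, b). (adj t a, adj t b)) ` invs \<sigma> r)"
    proof (cases "x = (t, Suc t)")
      case False
      have "(adj t a, adj t b) \<in> invs \<sigma> r"
        using x ab False assms by (auto simp: invs_def adj_def split: if_splits)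
      then have "(adj t (adj t a), adj t (adj t b)) \<in> (\<lambda>(a, b). (adj t a, adj t b)) ` invs \<sigma> r"
        by force
      then show ?thesis using ab by simp
    qed simp
  next
    fix x assume x: "x \<in> insert (t, Suc t) ((\<lambda>(a, b). (adj t a, adj t b)) ` invs \<sigma> r)"
    show "x \<in> invs (\<sigma> \<circ> adj t) r"
      using x assms by (auto simp: invs_def adj_def split: if_splits)
  qed
qed

lemma eps_adj:
  assumes "Suc t < length I" "\<sigma> t < \<sigma> (Suc t)"
  shows "eps q I (\<sigma> \<circ> adj t) = - q (I ! \<sigma> (Suc t)) (I ! \<sigma> t) * eps q I \<sigma>"
proof -
  let ?g = "\<lambda>(a, b). (adj t a, adj t b)"
  let ?F = "\<lambda>\<rho>. \<lambda>(a, b). - q (I ! \<rho> a) (I ! \<rho> b)"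
  have "eps q I (\<sigma> \<circ> adj t) = prod (?F (\<sigma> \<circ> adj t)) (insert (t, Suc t) (?g ` invs \<sigma> (length I)))"
    unfolding eps_invs invs_adj(1)[OF assms] ..
  also have "\<dots> = ?F (\<sigma> \<circ> adj t) (t, Suc t) * prod (?F (\<sigma> \<circ> adj t)) (?g ` invs \<sigma> (length I))"
    using invs_adj(2)[OF assms] by (intro prod.insert) auto
  also have "prod (?F (\<sigma> \<circ> adj t)) (?g ` invs \<sigma> (length I)) = prod (?F (\<sigma> \<circ> adj t) \<circ> ?g) (invs \<sigma> (length I))"
    using inj_adj_pair by (rule prod.reindex)
  also have "\<dots> = prod (?F \<sigma>) (invs \<sigma> (length I))"
    by (rule prod.cong) auto
  finally have "eps q I (\<sigma> \<circ> adj t) = ?F (\<sigma> \<circ> adj t) (t, Suc t) * eps q I \<sigma>"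
    by (simp only: eps_invs)
  then show ?thesis by (simp add: adj_def)
qed

lemma mono_adj_aux:
  assumes "\<forall>t. Suc t < r \<longrightarrow> \<sigma> t \<le> \<sigma> (Suc t)"
  shows "a \<le> b \<Longrightarrow> b < r \<Longrightarrow> \<sigma> a \<le> (\<sigma> b :: nat)"
proof (induction b)
  case 0 then show ?case by simp
next
  case (Suc b)
  show ?case
  proof (cases "a = Suc b")
    case False
    then have "\<sigma> a \<le> \<sigma> b" using Suc by simp
    also have "\<sigma> b \<le> \<sigma> (Suc b)" using assms Suc by simp
    finally show ?thesis .
  qed simp
qed

lemma permutes_no_invs_id:
  assumes "\<sigma> permutes {..<r}" "invs \<sigma> r = {}"
  shows "\<sigma> = id"
proof -
  have inj: "inj \<sigma>" using assms(1) permutes_inj by blast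
  have lt: "\<sigma> a < \<sigma> b" if "a < b" "b < r" for a b
  proof -
    have "\<not> \<sigma> a > \<sigma> b" using assms(2) that unfolding invs_def by blast
    moreover have "\<sigma> a \<noteq> \<sigma> b" using inj that by (metis less_irrefl injD)
    ultimately show ?thesis by simp
  qed
  have "sorted_wrt (<) (map \<sigma> [0..<r])"
    unfolding sorted_wrt_iff_nth_less using lt by auto
  then have s: "sorted (map \<sigma> [0..<r])" "distinct (map \<sigma> [0..<r])"
    by (auto simp: strict_sorted_iff)
  have "set (map \<sigma> [0..<r]) = \<sigma> ` {..<r}" by auto
  also have "\<dots> = {..<r}" using assms(1) permutes_image by blast
  finally have "map \<sigma> [0..<r] = [0..<r]"
    using s by (intro sorted_distinct_set_unique) auto
  then have "\<sigma> k = k" if "k < r" for k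
    using that by (metis diff_zero length_upt map_eq_conv nth_upt plus_nat.add_0 nth_map length_map)
  moreover have "\<sigma> k = k" if "k \<ge> r" for k
    using assms(1) that by (simp add: permutes_def)
  ultimately show ?thesis by (metis eq_id_iff not_less)
qed

lemma perm_adj_induct:
  assumes "\<sigma> permutes {..<r}"
    and base: "P id"
    and step: "\<And>\<tau> t. \<tau> permutes {..<r} \<Longrightarrow> Suc t < r \<Longrightarrow> \<tau> t < \<tau> (Suc t) \<Longrightarrow> P \<tau> \<Longrightarrow> P (\<tau> \<circ> adj t)"
  shows "P \<sigma>"
proof -
  have "\<forall>\<sigma>. card (invs \<sigma> r) = k \<longrightarrow> \<sigma> permutes {..<r} \<longrightarrow> P \<sigma>" for k
  proof (induction k rule: less_induct)
    case (less k)
    show ?case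
    proof (intro allI impI)
      fix \<sigma> assume k: "card (invs \<sigma> r) = k" and p: "\<sigma> permutes {..<r}"
      show "P \<sigma>"
      proof (cases "invs \<sigma> r = {}")
        case True
        then show ?thesis using permutes_no_invs_id[OF p] base by simp
      next
        case False
        then obtain a b where ab: "a < b" "b < r" "\<sigma> a > \<sigma> b" unfolding invs_def by auto
        have "\<exists>t. Suc t < r \<and> \<sigma> t > \<sigma> (Suc t)"
        proof (rule ccontr)
          assume "\<not> ?thesis"
          then have "\<forall>t. Suc t < r \<longrightarrow> \<sigma> t \<le> \<sigma> (Suc t)" by auto
          from mono_adj_aux[OF this, of a b] ab show False by simp
        qed
        then obtain t where t: "Suc t < r" "\<sigma> t > \<sigma> (Suc t)" by blast
        define \<tau> where "\<tau> = \<sigma> \<circ> adj t"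
        have tp: "\<tau> permutes {..<r}" unfolding \<tau>_def
          by (rule permutes_compose[OF adj_permutes[OF t(1)] p])
        have tt: "\<tau> t < \<tau> (Suc t)" using t by (simp add: \<tau>_def adj_def)
        have st: "\<sigma> = \<tau> \<circ> adj t" unfolding \<tau>_def by (simp add: fun_eq_iff)
        have "card (invs \<sigma> r) = Suc (card (invs \<tau> r))"
          unfolding st invs_adj(1)[OF t(1) tt]
          using invs_adj(2)[OF t(1) tt]
          by (simp add: card_image[OF inj_adj_pair])
        then have "P \<tau>" using less.IH k tp by auto
        then show ?thesis using step[OF tp t(1) tt] st by simp
      qed
    qed
  qed
  then show ?thesis using assms(1) by blast
qed


lemma alg1:
  fixes A B X1 X2 X3 X4 e Q P :: "'a::ring_1"
  assumes ce: "\<And>x. e*x = x*e" and cQ: "\<And>x. Q*x=x*Q" and cP: "\<And>x. P*x=x*P"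
  shows "e*(A*X1*B) + (-(Q*e))*(A*X2*B) + P*(e*(A*X3*B) + (-(Q*e))*(A*X4*B))
       = e*(A*(X1 - Q*P*X4 + P*X3 - Q*X2)*B)"
proof -
  have r: "A*(Q*y) = Q*(A*y)" "A*(P*y) = P*(A*y)" "A*(e*y) = e*(A*y)"
     "Q*(e*y) = e*(Q*y)" "P*(e*y) = e*(P*y)" "P*(Q*y) = Q*(P*y)" for y
    by (metis ce cQ cP mult.assoc)+
  have r2: "Q*e = e*Q" "P*e = e*P" "P*Q = Q*P" using ce cQ cP by metis+
  show ?thesis by (simp add: algebra_simps r r2)
qed

lemma alg2:
  fixes A B X1 X2 e Q :: "'a::ring_1"
  assumes ce: "\<And>x. e*x = x*e" and cQ: "\<And>x. Q*x=x*Q"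
  shows "e*(A*X1*B) + (-(Q*e))*(A*X2*B) = e*(A*(X1 - Q*X2)*B)"
proof -
  have r: "A*(Q*y) = Q*(A*y)" "A*(e*y) = e*(A*y)" "Q*(e*y) = e*(Q*y)" for y
    by (metis ce cQ mult.assoc)+
  have r2: "Q*e = e*Q" using ce cQ by metis+
  show ?thesis by (simp add: algebra_simps r r2)
qed

lemma c_props:
  assumes "central_alg_hom c"
  shows "c z * x = x * c z" "c (a * b) = c a * c b" "c (a + b) = c a + c b" "c 1 = 1"
    "c 0 = 0" "c (- a) = - c a"
proof -
  show 1: "c z * x = x * c z" "c (a * b) = c a * c b" "c (a + b) = c a + c b" "c 1 = 1"
    using assms unfolding central_alg_hom_def by blast+
  have add: "c (x + y) = c x + c y" for x y using assms unfolding central_alg_hom_def by blast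
  from add[of 0 0] show 0: "c 0 = 0" by simp
  from add[of a "-a"] 0 show "c (- a) = - c a" by (metis neg_eq_iff_add_eq_0 add.right_inverse)
qed

lemma two_cancel:
  fixes c :: "complex \<Rightarrow> 'a::ring_1" and x :: 'a
  assumes "central_alg_hom c" "2 * x = (0::'a::ring_1)"
  shows "x = 0"
proof -
  have c2: "c 2 = 2" using c_props(3)[OF assms(1), where a=1 and b=1] c_props(4)[OF assms(1)]
    by (metis one_add_one)
  have "c (1/2) * 2 = c (1/2) * c 2" by (simp add: c2)
  also have "\<dots> = c (1/2 * 2)" by (rule c_props(2)[OF assms(1), symmetric])
  also have "\<dots> = 1" using c_props(4)[OF assms(1)] by simp
  finally have "c (1/2) * 2 = 1" .
  then have "x = c (1/2) * (2 * x)" by (metis mult.assoc mult_1)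
  with assms(2) show ?thesis by simp
qed

lemma pair_sum_zero:
  fixes c :: "complex \<Rightarrow> 'a::ring_1" and g :: "(nat \<Rightarrow> nat) \<Rightarrow> 'a"
  assumes cen: "central_alg_hom c" and t: "Suc t < r"
    and z: "\<And>\<sigma>. \<sigma> permutes {..<r} \<Longrightarrow> \<sigma> t < \<sigma> (Suc t) \<Longrightarrow> g \<sigma> + g (\<sigma> \<circ> adj t) = (0::'a::ring_1)"
  shows "(\<Sum>\<sigma> | \<sigma> permutes {..<r}. g \<sigma>) = 0"
proof -
  let ?S = "{\<sigma>. \<sigma> permutes {..<r}}"
  have cl: "\<sigma> \<circ> adj t \<in> ?S" if "\<sigma> \<in> ?S" for \<sigma>
    using that permutes_compose[OF adj_permutes[OF t]] by auto
  have cl': "\<sigma> \<circ> adj t permutes {..<r}" if "\<sigma> permutes {..<r}" for \<sigma>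
    using that permutes_compose[OF adj_permutes[OF t]] by auto
  have re: "sum g ?S = sum (\<lambda>\<sigma>. g (\<sigma> \<circ> adj t)) ?S"
    by (rule sum.reindex_bij_witness[of _ "\<lambda>\<sigma>. \<sigma> \<circ> adj t" "\<lambda>\<sigma>. \<sigma> \<circ> adj t"])
       (auto simp: cl' adj_comp_adj)
  have h0: "g \<sigma> + g (\<sigma> \<circ> adj t) = 0" if "\<sigma> \<in> ?S" for \<sigma>
  proof -
    have p: "\<sigma> permutes {..<r}" using that by simp
    have "\<sigma> t \<noteq> \<sigma> (Suc t)" using permutes_inj[OF p] by (metis injD n_not_Suc_n)
    then consider "\<sigma> t < \<sigma> (Suc t)" | "\<sigma> t > \<sigma> (Suc t)" by linarith
    then show ?thesis
    proof cases
      case 1 then show ?thesis using z p by blast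
    next
      case 2
      let ?\<rho> = "\<sigma> \<circ> adj t"
      have "?\<rho> permutes {..<r}" using cl that by simp
      moreover have "?\<rho> t < ?\<rho> (Suc t)" using 2 by (simp add: adj_def)
      ultimately have "g ?\<rho> + g (?\<rho> \<circ> adj t) = 0" using z by blast
      then show ?thesis by (simp add: adj_comp_adj add.commute)
    qed
  qed
  have "2 * sum g ?S = sum g ?S + sum (\<lambda>\<sigma>. g (\<sigma> \<circ> adj t)) ?S"
    using re by (simp add: mult_2)
  also have "\<dots> = sum (\<lambda>\<sigma>. g \<sigma> + g (\<sigma> \<circ> adj t)) ?S" by (simp add: sum.distrib)
  also have "\<dots> = 0" using h0 by simp
  finally show ?thesis using two_cancel[OF cen] by blast
qed

lemma prod_split:
  assumes "Suc t < r"
  shows "prod_list (map h [0..<r]) =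
    prod_list (map h [0..<t]) * (h t * h (Suc t)) * prod_list (map h [Suc (Suc t)..<r])"
proof -
  have "[0..<r] = [0..<t] @ [t..<r]" using assms
    using upt_add_eq_append[of 0 t "r - t"] by simp
  also have "[t..<r] = t # Suc t # [Suc (Suc t)..<r]" using assms
    by (simp add: upt_conv_Cons)
  finally show ?thesis by (simp add: mult.assoc)
qed

lemma prod_split_cong:
  assumes "Suc t < r" and "\<And>k. k < r \<Longrightarrow> k \<noteq> t \<Longrightarrow> k \<noteq> Suc t \<Longrightarrow> h k = h' k"
    and "h t = a" "h (Suc t) = b"
  shows "prod_list (map h [0..<r]) =
    prod_list (map h' [0..<t]) * (a * b) * prod_list (map h' [Suc (Suc t)..<r])"
proof -
  have A: "map h [0..<t] = map h' [0..<t]" using assms by (intro map_cong) auto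
  have B: "map h [Suc (Suc t)..<r] = map h' [Suc (Suc t)..<r]" using assms by (intro map_cong) auto
  show ?thesis unfolding prod_split[OF assms(1), of h] A B assms(3,4) ..
qed



lemma cdet_PP:
  "cdet c q M I L = (\<Sum>\<sigma> | \<sigma> permutes {..<length I}. c (eps q I \<sigma>) *
      prod_list (map (\<lambda>k. M (I ! \<sigma> k) (L ! k)) [0..<length I]))"
  by (simp add: cdet_def)

lemma cdet_swap:
  fixes c :: "complex \<Rightarrow> 'a::ring_1"
  assumes cen: "central_alg_hom c" and man: "manin c n m q p M"
    and I: "sorted_wrt (<) I" "set I \<subseteq> {1..n}"
    and L: "length L = length I" "set L \<subseteq> {1..m}"
    and t: "Suc t < length I"
  shows "L!t = L!Suc t \<Longrightarrow> cdet c q M I L = 0"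
    and "L!t < L!Suc t \<Longrightarrow> length L' = length I \<Longrightarrow> (\<forall>k<length I. L'!k = L!(adj t k)) \<Longrightarrow>
          cdet c q M I L + c (p (L!t) (L!Suc t)) * cdet c q M I L' = 0"
proof -
  let ?r = "length I"
  define PP where "PP \<sigma> \<Lambda> = prod_list (map (\<lambda>k. M (I ! \<sigma> k) (\<Lambda> ! k)) [0..<?r])" for \<sigma> \<Lambda>
  have cd: "cdet c q M I \<Lambda> = (\<Sum>\<sigma> | \<sigma> permutes {..<?r}. c (eps q I \<sigma>) * PP \<sigma> \<Lambda>)" for \<Lambda>
    by (simp add: cdet_def PP_def)
  define k where "k = L ! t"
  define l where "l = L ! Suc t"
  have "L ! t \<in> set L" "L ! Suc t \<in> set L" using L t by (auto intro!: nth_mem)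
  then have kl: "k \<in> {1..m}" "l \<in> {1..m}" using L(2) unfolding k_def l_def by blast+
  have cent: "c z * x = x * c z" for z x using c_props(1)[OF cen] .
  {
    fix \<sigma> assume p: "\<sigma> permutes {..<?r}" and lt: "\<sigma> t < \<sigma> (Suc t)"
    define i where "i = I ! \<sigma> t"
    define j where "j = I ! \<sigma> (Suc t)"
    have sr: "\<sigma> t < ?r" "\<sigma> (Suc t) < ?r" using p t permutes_in_image by fastforce+
    have ij: "i < j" unfolding i_def j_def using I(1) lt sr sorted_wrt_nth_less by blast
    have "I ! \<sigma> t \<in> set I" "I ! \<sigma> (Suc t) \<in> set I" using sr by (auto intro!: nth_mem)
    then have ijn: "i \<in> {1..n}" "j \<in> {1..n}" unfolding i_def j_def using I(2) by blast+
    define A where "A = prod_list (map (\<lambda>k. M (I ! \<sigma> k) (L ! k)) [0..<t])"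
    define B where "B = prod_list (map (\<lambda>k. M (I ! \<sigma> k) (L ! k)) [Suc (Suc t)..<?r])"
    have P1: "PP \<sigma> L = A * (M i k * M j l) * B"
      unfolding PP_def A_def B_def i_def j_def k_def l_def
      by (rule prod_split_cong[OF t]) auto
    have P2: "PP (\<sigma> \<circ> adj t) L = A * (M j k * M i l) * B"
      unfolding PP_def A_def B_def i_def j_def k_def l_def
      by (rule prod_split_cong[OF t]) (auto simp: adj_def)
    have e2: "c (eps q I (\<sigma> \<circ> adj t)) = - (c (q j i) * c (eps q I \<sigma>))"
      unfolding eps_adj[OF t lt] i_def j_def by (simp add: c_props(2,6)[OF cen])
    have "c (eps q I \<sigma>) * PP \<sigma> L + c (eps q I (\<sigma> \<circ> adj t)) * PP (\<sigma> \<circ> adj t) L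
        = c (eps q I \<sigma>) * (A * (M i k * M j l - c (q j i) * (M j k * M i l)) * B)"
      unfolding P1 P2 e2 by (rule alg2) (rule cent)+
    note this P1 P2 e2 ij ijn A_def B_def
  } note pt = this
  show "cdet c q M I L = 0" if eq: "L!t = L!Suc t"
    unfolding cd
  proof (rule pair_sum_zero[OF cen t])
    fix \<sigma> assume p: "\<sigma> permutes {..<?r}" and lt: "\<sigma> t < \<sigma> (Suc t)"
    have "M (I ! \<sigma> t) k * M (I ! \<sigma> (Suc t)) l - c (q (I ! \<sigma> (Suc t)) (I ! \<sigma> t)) * (M (I ! \<sigma> (Suc t)) k * M (I ! \<sigma> t) l) = 0"
      using man pt(5-7)[OF p lt] kl eq unfolding manin_def k_def l_def
      by (simp add: mult.assoc)
    then show "c (eps q I \<sigma>) * PP \<sigma> L + c (eps q I (\<sigma> \<circ> adj t)) * PP (\<sigma> \<circ> adj t) L = 0"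
      using pt(1)[OF p lt] by simp
  qed
  assume lt: "L!t < L!Suc t" and L': "length L' = length I" "\<forall>k<length I. L'!k = L!(adj t k)"
  have "(\<Sum>\<sigma> | \<sigma> permutes {..<?r}. c (eps q I \<sigma>) * PP \<sigma> L + c (p k l) * (c (eps q I \<sigma>) * PP \<sigma> L')) = 0"
  proof (rule pair_sum_zero[OF cen t])
    fix \<sigma> assume p: "\<sigma> permutes {..<?r}" and lt2: "\<sigma> t < \<sigma> (Suc t)"
    define i where "i = I ! \<sigma> t"
    define j where "j = I ! \<sigma> (Suc t)"
    have P1: "PP \<sigma> L = A * (M i k * M j l) * B" and P2: "PP (\<sigma> \<circ> adj t) L = A * (M j k * M i l) * B"
      and e2: "c (eps q I (\<sigma> \<circ> adj t)) = - (c (q j i) * c (eps q I \<sigma>))"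
      and ij: "i < j" and ijn: "i \<in> {1..n}" "j \<in> {1..n}"
      if "A = prod_list (map (\<lambda>k. M (I ! \<sigma> k) (L ! k)) [0..<t])"
         "B = prod_list (map (\<lambda>k. M (I ! \<sigma> k) (L ! k)) [Suc (Suc t)..<?r])" for A B
      using pt(2-7)[OF p lt2] that unfolding i_def j_def by blast+
    define A where "A = prod_list (map (\<lambda>k. M (I ! \<sigma> k) (L ! k)) [0..<t])"
    define B where "B = prod_list (map (\<lambda>k. M (I ! \<sigma> k) (L ! k)) [Suc (Suc t)..<?r])"
    note P1 = P1[OF A_def B_def] and P2 = P2[OF A_def B_def] and e2 = e2[OF A_def B_def]
      and ij = ij[OF A_def B_def] and ijn = ijn[OF A_def B_def]
    have L'e: "L' ! x = L ! x" if "x < ?r" "x \<noteq> t" "x \<noteq> Suc t" for x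
      using L' that by (simp add: adj_def)
    have L't: "L' ! t = l" "L' ! Suc t = k" using L' t by (auto simp: adj_def k_def l_def)
    have P3: "PP \<sigma> L' = A * (M i l * M j k) * B"
      unfolding PP_def A_def B_def i_def j_def
      by (rule prod_split_cong[OF t]) (auto simp: L'e L't)
    have P4: "PP (\<sigma> \<circ> adj t) L' = A * (M j l * M i k) * B"
      unfolding PP_def A_def B_def i_def j_def
      by (rule prod_split_cong[OF t]) (auto simp: L'e L't adj_def)
    have kl2: "k < l" using lt unfolding k_def l_def .
    have R: "M i k * M j l - c (q j i) * c (p k l) * (M j l * M i k) + c (p k l) * (M i l * M j k)
        - c (q j i) * (M j k * M i l) = 0"
      using man ij ijn kl kl2 unfolding manin_def
      by (simp add: mult.assoc c_props(2)[OF cen])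
    have "c (eps q I \<sigma>) * PP \<sigma> L + c (p k l) * (c (eps q I \<sigma>) * PP \<sigma> L') +
          (c (eps q I (\<sigma> \<circ> adj t)) * PP (\<sigma> \<circ> adj t) L + c (p k l) * (c (eps q I (\<sigma> \<circ> adj t)) * PP (\<sigma> \<circ> adj t) L'))
        = c (eps q I \<sigma>) * (A * (M i k * M j l) * B) + (- (c (q j i) * c (eps q I \<sigma>))) * (A * (M j k * M i l) * B)
          + c (p k l) * (c (eps q I \<sigma>) * (A * (M i l * M j k) * B) + (- (c (q j i) * c (eps q I \<sigma>))) * (A * (M j l * M i k) * B))"
      unfolding P1 P2 P3 P4 e2 by (simp add: distrib_left right_diff_distrib add_ac)
    also have "\<dots> = c (eps q I \<sigma>) * (A * (M i k * M j l - c (q j i) * c (p k l) * (M j l * M i k) + c (p k l) * (M i l * M j k)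
        - c (q j i) * (M j k * M i l)) * B)"
      by (rule alg1) (rule cent)+
    also have "\<dots> = 0" unfolding R by simp
    finally show "c (eps q I \<sigma>) * PP \<sigma> L + c (p k l) * (c (eps q I \<sigma>) * PP \<sigma> L') +
          (c (eps q I (\<sigma> \<circ> adj t)) * PP (\<sigma> \<circ> adj t) L + c (p k l) * (c (eps q I (\<sigma> \<circ> adj t)) * PP (\<sigma> \<circ> adj t) L')) = 0" .
  qed
  then show "cdet c q M I L + c (p (L!t) (L!Suc t)) * cdet c q M I L' = 0"
    unfolding cd k_def[symmetric] l_def[symmetric] by (simp add: sum.distrib sum_distrib_left)
qed



lemma invs_id: "invs id r = {}" by (auto simp: invs_def)

lemma eps_id: "eps q I id = 1" by (simp add: eps_invs invs_id)

lemma perm_adj_facts: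
  assumes \<tau>: "\<tau> permutes {..<length J}" and t: "Suc t < length J"
  shows "permute_list \<tau> J ! t = J ! \<tau> t" "permute_list \<tau> J ! Suc t = J ! \<tau> (Suc t)"
    "\<forall>k<length J. permute_list (\<tau> \<circ> adj t) J ! k = permute_list \<tau> J ! adj t k"
    "\<tau> t < length J" "\<tau> (Suc t) < length J"
proof -
  have a: "adj t k < length J" if "k < length J" for k using that t by (simp add: adj_def)
  show "permute_list \<tau> J ! t = J ! \<tau> t" "permute_list \<tau> J ! Suc t = J ! \<tau> (Suc t)"
    using t by (simp_all add: permute_list_def)
  show "\<forall>k<length J. permute_list (\<tau> \<circ> adj t) J ! k = permute_list \<tau> J ! adj t k"
    using a by (simp add: permute_list_def)
  show "\<tau> t < length J" "\<tau> (Suc t) < length J" using \<tau> t permutes_in_image by fastforce+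
qed

lemma cdet_perm_sorted:
  fixes c :: "complex \<Rightarrow> 'a::ring_1"
  assumes cen: "central_alg_hom c" and man: "manin c n m q p M" and par: "parametric_matrix m p"
    and I: "sorted_wrt (<) I" "set I \<subseteq> {1..n}"
    and J: "sorted_wrt (<) J" "length J = length I" "set J \<subseteq> {1..m}"
    and \<sigma>: "\<sigma> permutes {..<length I}"
  shows "cdet c q M I (permute_list \<sigma> J) = c (eps p J \<sigma>) * cdet c q M I J"
proof (rule perm_adj_induct[OF \<sigma>, where P = "\<lambda>\<sigma>. cdet c q M I (permute_list \<sigma> J) = c (eps p J \<sigma>) * cdet c q M I J"])
  show "cdet c q M I (permute_list id J) = c (eps p J id) * cdet c q M I J"
    by (simp add: eps_id c_props(4)[OF cen])
next
  fix \<tau> t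
  assume step: "\<tau> permutes {..<length I}" "Suc t < length I" "\<tau> t < \<tau> (Suc t)"
    "cdet c q M I (permute_list \<tau> J) = c (eps p J \<tau>) * cdet c q M I J"
  let ?L = "permute_list \<tau> J" and ?L' = "permute_list (\<tau> \<circ> adj t) J"
  have \<tau>: "\<tau> permutes {..<length J}" using step J(2) by simp
  have t: "Suc t < length J" using step J(2) by simp
  note f = perm_adj_facts[OF \<tau> t]
  have lt: "?L ! t < ?L ! Suc t" unfolding f(1,2) using J(1) step(3) f(5) sorted_wrt_nth_less by blast
  have setL: "set ?L = set J" using \<tau> by simp
  have "cdet c q M I ?L + c (p (?L!t) (?L!Suc t)) * cdet c q M I ?L' = 0"
    by (rule cdet_swap(2)[OF cen man I _ _ step(2) lt]) (use J f setL in auto)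
  define kk where "kk = J ! \<tau> t"
  define ll where "ll = J ! \<tau> (Suc t)"
  have "kk \<in> set J" "ll \<in> set J" unfolding kk_def ll_def using f(4,5) by auto
  then have klm: "kk \<in> {1..m}" "ll \<in> {1..m}" using J(3) by blast+
  have inv: "c (p ll kk) * c (p kk ll) = 1"
    using par klm unfolding parametric_matrix_def
    by (metis c_props(2,4)[OF cen] mult.commute)
  have e: "cdet c q M I ?L + c (p kk ll) * cdet c q M I ?L' = 0"
    using \<open>cdet c q M I ?L + _ = 0\<close> unfolding f(1,2) kk_def ll_def .
  have "c (p ll kk) * (cdet c q M I ?L + c (p kk ll) * cdet c q M I ?L') = 0"
    unfolding e by simp
  then have "c (p ll kk) * cdet c q M I ?L + cdet c q M I ?L' = 0"
    by (simp add: distrib_left mult.assoc[symmetric] inv)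
  then have "cdet c q M I ?L' = - (c (p ll kk) * cdet c q M I ?L)"
    by (simp add: eq_neg_iff_add_eq_0 add.commute)
  also have "\<dots> = - (c (p ll kk) * (c (eps p J \<tau>) * cdet c q M I J))" using step(4) by simp
  also have "\<dots> = c (- p ll kk * eps p J \<tau>) * cdet c q M I J"
    by (simp add: c_props(2,6)[OF cen] mult.assoc)
  also have "- p ll kk * eps p J \<tau> = eps p J (\<tau> \<circ> adj t)"
    unfolding eps_adj[OF t step(3)] kk_def ll_def ..
  finally show "cdet c q M I ?L' = c (eps p J (\<tau> \<circ> adj t)) * cdet c q M I J" .
qed

lemma cdet_perm_dup:
  fixes c :: "complex \<Rightarrow> 'a::ring_1"
  assumes cen: "central_alg_hom c" and man: "manin c n m q p M"
    and I: "sorted_wrt (<) I" "set I \<subseteq> {1..n}"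
    and S: "sorted S" "\<not> distinct S" "length S = length I" "set S \<subseteq> {1..m}"
    and \<sigma>: "\<sigma> permutes {..<length I}"
    and par: "parametric_matrix m p"
  shows "cdet c q M I (permute_list \<sigma> S) = 0"
proof (rule perm_adj_induct[OF \<sigma>, where P = "\<lambda>\<sigma>. cdet c q M I (permute_list \<sigma> S) = 0"])
  obtain a b where ab: "a < b" "b < length S" "S ! a = S ! b"
    using S(2) by (auto simp: distinct_conv_nth) (metis linorder_neqE_nat)
  have mono: "\<And>i j. i \<le> j \<Longrightarrow> j < length S \<Longrightarrow> S!i \<le> S!j"
    using S(1) by (simp add: sorted_iff_nth_mono)
  have "S ! a \<le> S ! Suc a" by (rule mono) (use ab in auto)
  moreover have "S ! Suc a \<le> S ! b" by (rule mono) (use ab in auto)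
  ultimately have eq: "S ! a = S ! Suc a" using ab by simp
  have "cdet c q M I S = 0"
    by (rule cdet_swap(1)[OF cen man I S(3,4), of a]) (use ab S(3) eq in auto)
  then show "cdet c q M I (permute_list id S) = 0" by simp
next
  fix \<tau> t
  assume step: "\<tau> permutes {..<length I}" "Suc t < length I" "\<tau> t < \<tau> (Suc t)"
    "cdet c q M I (permute_list \<tau> S) = 0"
  let ?L = "permute_list \<tau> S" and ?L' = "permute_list (\<tau> \<circ> adj t) S"
  have \<tau>: "\<tau> permutes {..<length S}" using step S(3) by simp
  have t: "Suc t < length S" using step S(3) by simp
  note f = perm_adj_facts[OF \<tau> t]
  have le: "?L ! t \<le> ?L ! Suc t" unfolding f(1,2) using S(1) step(3) f(5)
    by (auto simp: sorted_iff_nth_mono)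
  have setL: "set ?L = set S" using \<tau> by simp
  show "cdet c q M I (permute_list (\<tau> \<circ> adj t) S) = 0"
  proof (cases "?L ! t = ?L ! Suc t")
    case True
    have "?L' = ?L"
      by (rule nth_equalityI) (use f(3) True in \<open>auto simp: adj_def\<close>)
    then show ?thesis using step(4) by simp
  next
    case False
    then have lt: "?L ! t < ?L ! Suc t" using le by simp
    have e: "cdet c q M I ?L + c (p (?L!t) (?L!Suc t)) * cdet c q M I ?L' = 0"
      by (rule cdet_swap(2)[OF cen man I _ _ step(2) lt]) (use S f setL in auto)
    then have z: "c (p (?L!t) (?L!Suc t)) * cdet c q M I ?L' = 0" using step(4) by simp
    define kk where "kk = ?L ! t"
    define ll where "ll = ?L ! Suc t"
    have "c (p kk ll) * cdet c q M I ?L' = 0" using z unfolding kk_def ll_def .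
    have "kk \<in> set ?L" "ll \<in> set ?L" unfolding kk_def ll_def using t by auto
    then have klm: "kk \<in> {1..m}" "ll \<in> {1..m}" using S(4) setL by blast+
    have inv: "c (p ll kk) * c (p kk ll) = 1"
      using par klm unfolding parametric_matrix_def
      by (metis c_props(2,4)[OF cen] mult.commute)
    have "c (p ll kk) * (c (p kk ll) * cdet c q M I ?L') = 0"
      using \<open>c (p kk ll) * cdet c q M I ?L' = 0\<close> by simp
    then show ?thesis by (simp add: mult.assoc[symmetric] inv)
  qed
qed



lemma cdet_nondistinct:
  fixes c :: "complex \<Rightarrow> 'a::ring_1"
  assumes cen: "central_alg_hom c" and man: "manin c n m q p M" and par: "parametric_matrix m p"
    and I: "sorted_wrt (<) I" "set I \<subseteq> {1..n}"
    and L: "length L = length I" "set L \<subseteq> {1..m}" "\<not> distinct L"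
  shows "cdet c q M I L = 0"
proof -
  have "mset L = mset (sort L)" by simp
  then obtain \<tau> where \<tau>: "\<tau> permutes {..<length (sort L)}" "permute_list \<tau> (sort L) = L"
    by (rule mset_eq_permutation)
  have "cdet c q M I (permute_list \<tau> (sort L)) = 0"
    by (rule cdet_perm_dup[OF cen man I _ _ _ _ _ par]) (use L \<tau> in auto)
  then show ?thesis using \<tau> by simp
qed

lemma prod_sum_expand:
  fixes g :: "nat \<Rightarrow> nat \<Rightarrow> 'a::semiring_1"
  assumes A: "finite A"
  shows "prod_list (map (\<lambda>k. \<Sum>l\<in>A. g k l) [0..<r]) =
    (\<Sum>L\<in>{L. set L \<subseteq> A \<and> length L = r}. prod_list (map (\<lambda>k. g k (L!k)) [0..<r]))"
proof (induction r)
  case 0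
  have "{L. set L \<subseteq> A \<and> length L = 0} = {[]}" by auto
  then show ?case by simp
next
  case (Suc r)
  let ?LL = "\<lambda>r. {L. set L \<subseteq> A \<and> length L = r}"
  have "prod_list (map (\<lambda>k. \<Sum>l\<in>A. g k l) [0..<Suc r]) =
      prod_list (map (\<lambda>k. \<Sum>l\<in>A. g k l) [0..<r]) * (\<Sum>l\<in>A. g r l)" by simp
  also have "\<dots> = (\<Sum>L\<in>?LL r. \<Sum>l\<in>A. prod_list (map (\<lambda>k. g k (L!k)) [0..<r]) * g r l)"
    unfolding Suc by (simp add: sum_distrib_left sum_distrib_right sum.swap[of _ A])
  also have "\<dots> = (\<Sum>(L, l)\<in>?LL r \<times> A. prod_list (map (\<lambda>k. g k (L!k)) [0..<r]) * g r l)"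
    by (rule sum.cartesian_product)
  also have "\<dots> = (\<Sum>L\<in>?LL (Suc r). prod_list (map (\<lambda>k. g k (L!k)) [0..<Suc r]))"
  proof (rule sum.reindex_bij_witness[of _ "\<lambda>L. (butlast L, last L)" "\<lambda>(L, l). L @ [l]"])
    fix a assume "a \<in> ?LL r \<times> A"
    then show "(butlast (case a of (L, l) \<Rightarrow> L @ [l]), last (case a of (L, l) \<Rightarrow> L @ [l])) = a"
      "(case a of (L, l) \<Rightarrow> L @ [l]) \<in> ?LL (Suc r)" by auto
  next
    fix b assume b: "b \<in> ?LL (Suc r)"
    then have "b \<noteq> []" by auto
    then show "(case (butlast b, last b) of (L, l) \<Rightarrow> L @ [l]) = b" by simp
    show "(butlast b, last b) \<in> ?LL r \<times> A"
      using b \<open>b \<noteq> []\<close> by (auto dest: in_set_butlastD)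
  next
    fix a assume a: "a \<in> ?LL r \<times> A"
    obtain L l where al: "a = (L, l)" by (cases a)
    have me: "map (\<lambda>k. g k ((L @ [l]) ! k)) [0..<r] = map (\<lambda>k. g k (L ! k)) [0..<r]"
      using a al by (intro map_cong) (auto simp: nth_append)
    have "prod_list (map (\<lambda>k. g k ((L @ [l]) ! k)) [0..<Suc r]) = prod_list (map (\<lambda>k. g k ((L @ [l]) ! k)) [0..<r]) * g r l"
      using a al by (simp add: nth_append)
    then have "prod_list (map (\<lambda>k. g k ((L @ [l]) ! k)) [0..<Suc r]) = prod_list (map (\<lambda>k. g k (L ! k)) [0..<r]) * g r l"
      unfolding me .
    then show "prod_list (map (\<lambda>k. g k ((case a of (L, l) \<Rightarrow> L @ [l]) ! k)) [0..<Suc r]) =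
        (case a of (L, l) \<Rightarrow> prod_list (map (\<lambda>k. g k (L ! k)) [0..<r]) * g r l)"
      by (simp only: al prod.case)
  qed
  finally show ?case .
qed

lemma comm_prod_list:
  fixes z :: "'a::monoid_mult"
  assumes "\<forall>y\<in>set xs. z * a y = a y * z"
  shows "z * prod_list (map a xs) = prod_list (map a xs) * z"
  using assms
proof (induction xs)
  case (Cons y xs)
  then have "z * (a y * prod_list (map a xs)) = a y * (z * prod_list (map a xs))"
    by (metis mult.assoc list.set_intros(1))
  also have "\<dots> = a y * (prod_list (map a xs) * z)" using Cons by simp
  finally show ?case by (simp add: mult.assoc)
qed simp

lemma prod_list_mult_comm:
  fixes a b :: "nat \<Rightarrow> 'a::monoid_mult"
  assumes "\<forall>x\<in>set xs. \<forall>y\<in>set xs. b x * a y = a y * b x"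
  shows "prod_list (map (\<lambda>x. a x * b x) xs) = prod_list (map a xs) * prod_list (map b xs)"
  using assms
proof (induction xs)
  case (Cons x xs)
  have c: "b x * prod_list (map a xs) = prod_list (map a xs) * b x"
    by (rule comm_prod_list) (use Cons.prems in auto)
  have "prod_list (map (\<lambda>x. a x * b x) (x # xs)) = a x * b x * (prod_list (map a xs) * prod_list (map b xs))"
    using Cons by simp
  also have "\<dots> = a x * (b x * prod_list (map a xs)) * prod_list (map b xs)" by (simp add: mult.assoc)
  also have "\<dots> = a x * prod_list (map a xs) * (b x * prod_list (map b xs))" unfolding c by (simp add: mult.assoc)
  finally show ?case by simp
qed simp



lemma cauchy_binet_general:
  fixes c :: "complex \<Rightarrow> 'a::ring_1"
  assumes cen: "central_alg_hom c" and man: "manin c n m q p M" and par: "parametric_matrix m p"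
    and comm: "\<forall>i\<in>{1..m}. \<forall>j\<in>{1..s}. \<forall>k\<in>{1..n}. \<forall>l\<in>{1..m}. N i j * M k l = M k l * N i j"
    and I: "sorted_wrt (<) I" "set I \<subseteq> {1..n}"
    and K: "length K = length I" "set K \<subseteq> {1..s}"
  shows "cdet c q (matmul m M N) I K =
     (\<Sum>J\<in>incr_multi_indices (length I) m. cdet c q M I J * cdet c p N J K)"
proof -
  let ?r = "length I"
  let ?LL = "{L. set L \<subseteq> {1..m} \<and> length L = ?r}"
  let ?PS = "{\<sigma>. \<sigma> permutes {..<?r}}"
  define PN where "PN L = prod_list (map (\<lambda>k. N (L!k) (K!k)) [0..<?r])" for L
  define PM where "PM \<sigma> L = prod_list (map (\<lambda>k. M (I ! \<sigma> k) (L!k)) [0..<?r])" for \<sigma> L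
  have Kin: "K ! k \<in> {1..s}" if "k < ?r" for k
  proof -
    have "K ! k \<in> set K" using K that by simp
    then show ?thesis using K by blast
  qed
  have Iin: "I ! \<sigma> k \<in> {1..n}" if "\<sigma> \<in> ?PS" "k < ?r" for \<sigma> k
  proof -
    have "\<sigma> k < ?r" using that permutes_in_image by fastforce
    then have "I ! \<sigma> k \<in> set I" by simp
    then show ?thesis using I(2) by blast
  qed
  have step1: "cdet c q (matmul m M N) I K = (\<Sum>\<sigma>\<in>?PS. c (eps q I \<sigma>) * (\<Sum>L\<in>?LL. PM \<sigma> L * PN L))"
    unfolding cdet_def matmul_def
  proof (rule sum.cong[OF refl])
    fix \<sigma> assume \<sigma>: "\<sigma> \<in> ?PS"
    have "prod_list (map (\<lambda>k. \<Sum>l = 1..m. M (I ! \<sigma> k) l * N l (K ! k)) [0..<?r])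
        = (\<Sum>L\<in>?LL. prod_list (map (\<lambda>k. M (I ! \<sigma> k) (L!k) * N (L!k) (K ! k)) [0..<?r]))"
      by (rule prod_sum_expand) simp
    also have "\<dots> = (\<Sum>L\<in>?LL. PM \<sigma> L * PN L)"
    proof (rule sum.cong[OF refl])
      fix L assume L: "L \<in> ?LL"
      have Lin: "L ! k \<in> {1..m}" if "k < ?r" for k
      proof -
        have "L ! k \<in> set L" using L that by simp
        then show ?thesis using L by blast
      qed
      show "prod_list (map (\<lambda>k. M (I ! \<sigma> k) (L!k) * N (L!k) (K ! k)) [0..<?r]) = PM \<sigma> L * PN L"
        unfolding PM_def PN_def
        by (rule prod_list_mult_comm) (use comm Lin Kin Iin[OF \<sigma>] in auto)
    qed
    finally show "c (eps q I \<sigma>) * prod_list (map (\<lambda>k. \<Sum>l = 1..m. M (I ! \<sigma> k) l * N l (K ! k)) [0..<?r])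
        = c (eps q I \<sigma>) * (\<Sum>L\<in>?LL. PM \<sigma> L * PN L)" by simp
  qed
  have cdM: "cdet c q M I L = (\<Sum>\<sigma>\<in>?PS. c (eps q I \<sigma>) * PM \<sigma> L)" for L
    unfolding cdet_def PM_def by simp
  have step2: "(\<Sum>\<sigma>\<in>?PS. c (eps q I \<sigma>) * (\<Sum>L\<in>?LL. PM \<sigma> L * PN L)) = (\<Sum>L\<in>?LL. cdet c q M I L * PN L)"
    unfolding cdM by (simp add: sum_distrib_left sum_distrib_right mult.assoc sum.swap[of _ ?PS])
  let ?LD = "{L. set L \<subseteq> {1..m} \<and> length L = ?r \<and> distinct L}"
  have finLL: "finite ?LL" by (rule finite_lists_length_eq) simp
  have step3: "(\<Sum>L\<in>?LL. cdet c q M I L * PN L) = (\<Sum>L\<in>?LD. cdet c q M I L * PN L)"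
  proof (rule sum.mono_neutral_right[OF finLL])
    show "?LD \<subseteq> ?LL" by blast
    show "\<forall>L\<in>?LL - ?LD. cdet c q M I L * PN L = 0"
      using cdet_nondistinct[OF cen man par I] by auto
  qed
  let ?IM = "incr_multi_indices ?r m"
  have finIM: "finite ?IM"
    by (rule finite_subset[OF _ finLL]) (auto simp: incr_multi_indices_def)
  have finPS: "finite ?PS" by (rule finite_permutations) simp
  define tau where "tau (L::nat list) = (SOME \<tau>. \<tau> permutes {..<?r} \<and> permute_list \<tau> (sort L) = L)" for L
  have tau: "tau L permutes {..<?r} \<and> permute_list (tau L) (sort L) = L" if "L \<in> ?LD" for L
  proof -
    have "mset L = mset (sort L)" by simp
    then obtain \<tau> where "\<tau> permutes {..<length (sort L)}" "permute_list \<tau> (sort L) = L"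
      by (rule mset_eq_permutation)
    then have "\<exists>\<tau>. \<tau> permutes {..<?r} \<and> permute_list \<tau> (sort L) = L" using that by auto
    then show ?thesis unfolding tau_def by (rule someI_ex)
  qed
  have step4: "(\<Sum>L\<in>?LD. cdet c q M I L * PN L) =
      (\<Sum>(J, \<tau>)\<in>Sigma ?IM (\<lambda>_. ?PS). cdet c q M I (permute_list \<tau> J) * PN (permute_list \<tau> J))"
  proof (rule sum.reindex_bij_witness[of _ "\<lambda>(J, \<tau>). permute_list \<tau> J" "\<lambda>L. (sort L, tau L)"])
    fix b assume b: "b \<in> ?LD"
    show "(\<lambda>(J, \<tau>). permute_list \<tau> J) ((\<lambda>L. (sort L, tau L)) b) = b" using tau[OF b] by simp
    have "sorted_wrt (<) (sort b)" using b by (simp add: strict_sorted_iff)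
    then show "(\<lambda>L. (sort L, tau L)) b \<in> Sigma ?IM (\<lambda>_. ?PS)"
      using tau[OF b] b by (simp add: incr_multi_indices_def)
    show "(case (sort b, tau b) of (J, \<tau>) \<Rightarrow> cdet c q M I (permute_list \<tau> J) * PN (permute_list \<tau> J)) =
       cdet c q M I b * PN b"
      using tau[OF b] by simp
  next
    fix a assume a: "a \<in> Sigma ?IM (\<lambda>_. ?PS)"
    obtain J \<tau> where aj: "a = (J, \<tau>)" by (cases a)
    have J: "sorted_wrt (<) J" "length J = ?r" "set J \<subseteq> {1..m}" and \<tau>: "\<tau> permutes {..<?r}"
      using a aj by (auto simp: incr_multi_indices_def)
    have dJ: "distinct J" "sorted J" using J(1) by (auto simp: strict_sorted_iff)
    have \<tau>': "\<tau> permutes {..<length J}" using \<tau> J by simp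
    have sJ: "sort (permute_list \<tau> J) = J"
      by (rule properties_for_sort) (use \<tau>' dJ in auto)
    have "tau (permute_list \<tau> J) = \<tau>"
      unfolding tau_def sJ
    proof (rule some_equality)
      show "\<tau> permutes {..<?r} \<and> permute_list \<tau> J = permute_list \<tau> J" using \<tau> by simp
      fix \<rho> assume \<rho>: "\<rho> permutes {..<?r} \<and> permute_list \<rho> J = permute_list \<tau> J"
      show "\<rho> = \<tau>"
      proof
        fix x show "\<rho> x = \<tau> x"
        proof (cases "x < ?r")
          case True
          have "permute_list \<rho> J ! x = permute_list \<tau> J ! x" using \<rho> by simp
          then have "J ! \<rho> x = J ! \<tau> x" using True J(2) by (simp add: permute_list_def)
          moreover have "\<rho> x < ?r" "\<tau> x < ?r" using \<rho> \<tau> True permutes_in_image by fastforce+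
          ultimately show ?thesis using dJ(1) J(2) nth_eq_iff_index_eq by metis
        next
          case False
          then show ?thesis using \<rho> \<tau> by (simp add: permutes_def)
        qed
      qed
    qed
    then show "(\<lambda>L. (sort L, tau L)) ((\<lambda>(J, \<tau>). permute_list \<tau> J) a) = a" using sJ aj by simp
    show "(\<lambda>(J, \<tau>). permute_list \<tau> J) a \<in> ?LD" using aj J \<tau>' dJ by simp
  qed
  have step5: "(\<Sum>(J, \<tau>)\<in>Sigma ?IM (\<lambda>_. ?PS). cdet c q M I (permute_list \<tau> J) * PN (permute_list \<tau> J))
      = (\<Sum>J\<in>?IM. \<Sum>\<tau>\<in>?PS. cdet c q M I (permute_list \<tau> J) * PN (permute_list \<tau> J))"
    by (rule sum.Sigma[symmetric]) (use finIM finPS in auto)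
  have step6: "(\<Sum>\<tau>\<in>?PS. cdet c q M I (permute_list \<tau> J) * PN (permute_list \<tau> J))
      = cdet c q M I J * cdet c p N J K" if J: "J \<in> ?IM" for J
  proof -
    have J': "sorted_wrt (<) J" "length J = ?r" "set J \<subseteq> {1..m}"
      using J by (auto simp: incr_multi_indices_def)
    have "(\<Sum>\<tau>\<in>?PS. cdet c q M I (permute_list \<tau> J) * PN (permute_list \<tau> J))
        = (\<Sum>\<tau>\<in>?PS. cdet c q M I J * (c (eps p J \<tau>) * prod_list (map (\<lambda>k. N (J ! \<tau> k) (K ! k)) [0..<length J])))"
    proof (rule sum.cong[OF refl])
      fix \<tau> assume \<tau>: "\<tau> \<in> ?PS"
      have PNe: "PN (permute_list \<tau> J) = prod_list (map (\<lambda>k. N (J ! \<tau> k) (K ! k)) [0..<length J])"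
        unfolding PN_def using J'(2) by (intro arg_cong[where f = prod_list] map_cong) (auto simp: permute_list_def)
      have "cdet c q M I (permute_list \<tau> J) = c (eps p J \<tau>) * cdet c q M I J"
        by (rule cdet_perm_sorted[OF cen man par I J']) (use \<tau> in simp)
      then show "cdet c q M I (permute_list \<tau> J) * PN (permute_list \<tau> J) =
          cdet c q M I J * (c (eps p J \<tau>) * prod_list (map (\<lambda>k. N (J ! \<tau> k) (K ! k)) [0..<length J]))"
        unfolding PNe by (simp add: c_props(1)[OF cen] mult.assoc)
    qed
    also have "\<dots> = cdet c q M I J * cdet c p N J K"
      unfolding cdet_def[of c p N J K] J'(2) by (simp add: sum_distrib_left)
    finally show ?thesis .
  qed
  show ?thesis
    unfolding step1 step2 step3 step4 step5 using step6 by simp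
qed


lemma incr_empty: "r > m \<Longrightarrow> incr_multi_indices r m = {}"
proof (rule ccontr)
  assume r: "r > m" and "incr_multi_indices r m \<noteq> {}"
  then obtain J where J: "length J = r" "sorted_wrt (<) J" "set J \<subseteq> {1..m}"
    by (auto simp: incr_multi_indices_def)
  then have "distinct J" by (simp add: strict_sorted_iff)
  then have "card (set J) = r" using J(1) by (simp add: distinct_card)
  moreover have "card (set J) \<le> card {1..m}" using J(3) by (rule card_mono[rotated]) simp
  ultimately show False using r by simp
qed

lemma incr_full: "incr_multi_indices n n = {[1..<n+1]}"
proof
  have "[1..<n+1] \<in> incr_multi_indices n n"
    unfolding incr_multi_indices_def by (simp del: upt_Suc add: sorted_wrt_upt atLeastLessThanSuc_atLeastAtMost)
  then show "{[1..<n+1]} \<subseteq> incr_multi_indices n n" by blast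
  show "incr_multi_indices n n \<subseteq> {[1..<n+1]}"
  proof
    fix J assume "J \<in> incr_multi_indices n n"
    then have J: "length J = n" "sorted_wrt (<) J" "set J \<subseteq> {1..n}"
      by (auto simp: incr_multi_indices_def)
    then have d: "distinct J" "sorted J" by (auto simp: strict_sorted_iff)
    then have "card (set J) = n" using J(1) by (simp add: distinct_card)
    then have "set J = {1..n}" using J(3) by (intro card_subset_eq) simp_all
    then have "J = [1..<n+1]"
      using d by (intro sorted_distinct_set_unique) (simp_all del: upt_Suc add: atLeastLessThanSuc_atLeastAtMost)
    then show "J \<in> {[1..<n+1]}" by simp
  qed
qed

theorem mainTheorem5:
  fixes c :: "complex \<Rightarrow> 'a::ring_1"
    and n m s :: nat
    and q p :: "nat \<Rightarrow> nat \<Rightarrow> complex"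
    and M N :: "nat \<Rightarrow> nat \<Rightarrow> 'a"
    and I K :: "nat list"
  assumes "central_alg_hom c"
    and "parametric_matrix n q" and "parametric_matrix m p"
    and "manin c n m q p M"
    and "\<forall>i\<in>{1..m}. \<forall>j\<in>{1..s}. \<forall>k\<in>{1..n}. \<forall>l\<in>{1..m}. N i j * M k l = M k l * N i j"
    and "sorted_wrt (<) I" and "set I \<subseteq> {1..n}"
    and "length K = length I" and "set K \<subseteq> {1..s}"
  shows "(length I \<le> m \<longrightarrow>
           cdet c q (matmul m M N) I K =
             (\<Sum>J\<in>incr_multi_indices (length I) m. cdet c q M I J * cdet c p N J K))
       \<and> (length I > m \<longrightarrow> cdet c q (matmul m M N) I K = 0)
       \<and> (m = n \<and> s = n \<longrightarrow>
           cdet c q (matmul m M N) [1..<n+1] [1..<n+1] =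
             cdet c q M [1..<n+1] [1..<n+1] * cdet c p N [1..<n+1] [1..<n+1])"
proof -
  have gen: "cdet c q (matmul m M N) I K =
     (\<Sum>J\<in>incr_multi_indices (length I) m. cdet c q M I J * cdet c p N J K)"
    by (rule cauchy_binet_general[OF assms(1,4,3,5,6,7,8,9)])
  have third: "cdet c q (matmul m M N) [1..<n+1] [1..<n+1] =
             cdet c q M [1..<n+1] [1..<n+1] * cdet c p N [1..<n+1] [1..<n+1]"
    if mn: "m = n \<and> s = n"
  proof -
    have "cdet c q (matmul m M N) [1..<n+1] [1..<n+1] =
      (\<Sum>J\<in>incr_multi_indices (length [1..<n+1]) m. cdet c q M [1..<n+1] J * cdet c p N J [1..<n+1])"
    proof (rule cauchy_binet_general[OF assms(1,4,3,5)])
      show "sorted_wrt (<) [1..<n+1]" by (rule sorted_wrt_upt)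
      show "set [1..<n+1] \<subseteq> {1..n}" by (simp del: upt_Suc add: atLeastLessThanSuc_atLeastAtMost)
      show "length [1..<n+1] = length [1..<n+1]" ..
      show "set [1..<n+1] \<subseteq> {1..s}" using mn by (simp del: upt_Suc add: atLeastLessThanSuc_atLeastAtMost)
    qed
    also have "\<dots> = cdet c q M [1..<n+1] [1..<n+1] * cdet c p N [1..<n+1] [1..<n+1]"
      using mn incr_full[of n] by (simp del: upt_Suc)
    finally show ?thesis .
  qed
  show ?thesis using gen third incr_empty[of m "length I"] by auto
qed

end
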